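(* Let $\xi_1,\dots,\xi_n$ be independent real random variables with $\mathbf{E}\xi_i=0$, satisfying Bernstein's condition: there is a constant $\varepsilon>0$ such that $|\mathbf{E}\xi_i^k|\le \frac12 k!\,\varepsilon^{k-2}\mathbf{E}\xi_i^2$ for all $k\ge 3$ and $i=1,\dots,n$. Let $\sigma^2=\sum_{i=1}^n\mathbf{E}\xi_i^2$ and, for $0\le\lambda<\varepsilon^{-1}$, \[ \overline{\sigma}^2(\lambda)=\sum_{i=1}^n\Big(\frac{\mathbf{E}\xi_i^2e^{\lambda\xi_i}}{\mathbf{E}e^{\lambda\xi_i}}-\frac{(\mathbf{E}\xi_ie^{\lambda\xi_i})^2}{(\mathbf{E}e^{\lambda\xi_i})^2}\Big). \] Then for all $0\le\lambda<\varepsilon^{-1}$, \[ \frac{(1-\lambda\varepsilon)^2(1-3\lambda\varepsilon)}{(1-\lambda\varepsilon+6\lambda^2\varepsilon^2)^2}\sigma^2\le\overline{\sigma}^2(\lambda)\le\frac{\sigma^2}{(1-\lambda\varepsilon)^3}. \] *)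

theory Defs
  imports "HOL-Probability.Probability"
begin

definition sigma_sq :: "'a measure \<Rightarrow> (nat \<Rightarrow> 'a \<Rightarrow> real) \<Rightarrow> nat \<Rightarrow> real" where
  "sigma_sq M X n = (\<Sum>i=1..n. integral\<^sup>L M (\<lambda>x. (X i x)^2))"

definition sigma_bar_sq :: "'a measure \<Rightarrow> (nat \<Rightarrow> 'a \<Rightarrow> real) \<Rightarrow> nat \<Rightarrow> real \<Rightarrow> real" where
  "sigma_bar_sq M X n l = (\<Sum>i=1..n.
      integral\<^sup>L M (\<lambda>x. (X i x)^2 * exp (l * X i x)) / integral\<^sup>L M (\<lambda>x. exp (l * X i x))
    - (integral\<^sup>L M (\<lambda>x. X i x * exp (l * X i x)))^2 / (integral\<^sup>L M (\<lambda>x. exp (l * X i x)))^2)"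

end

theory Submission
  imports Defs
begin


lemma Q_identity:
  fixes x :: real
  shows "(1-x)^3 * (\<Sum>k<n. (real k+1)*(real k+2)/2 * x^k)
     = 1 - x^n * ((real n+1)*(real n+2)/2 - real n*(real n+2)*x + real n*(real n+1)/2*x^2)"
proof (induction n)
  case 0 then show ?case by simp
next
  case (Suc n)
  have "(1-x)^3 * (\<Sum>k<Suc n. (real k+1)*(real k+2)/2 * x^k)
     = (1-x)^3 * (\<Sum>k<n. (real k+1)*(real k+2)/2 * x^k) + (1-x)^3 * ((real n+1)*(real n+2)/2 * x^n)"
    by (simp add: algebra_simps)
  also have "\<dots> = 1 - x^n * ((real n+1)*(real n+2)/2 - real n*(real n+2)*x + real n*(real n+1)/2*x^2)
       + (1-x)^3 * ((real n+1)*(real n+2)/2 * x^n)" using Suc by simp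
  also have "\<dots> = 1 - x^(Suc n) * ((real (Suc n)+1)*(real (Suc n)+2)/2 - real (Suc n)*(real (Suc n)+2)*x + real (Suc n)*(real (Suc n)+1)/2*x^2)"
    by (simp add: field_simps power2_eq_square power3_eq_cube)
  finally show ?case .
qed

lemma Q_bound:
  fixes x :: real
  assumes "0 \<le> x" "x < 1"
  shows "(\<Sum>k<n. (real k+1)*(real k+2)/2 * x^k) \<le> 1/(1-x)^3"
proof -
  define R where "R = (real n+1)*(real n+2)/2 - real n*(real n+2)*x + real n*(real n+1)/2*x^2"
  have R: "R \<ge> 0"
  proof -
    have "2*R = real n*(real n+1)*(1-x)^2 + 2*(real n+1 - real n*x)" unfolding R_def by (simp add: field_simps power2_eq_square)
    moreover have "real n * x \<le> real n" using assms by (simp add: mult_left_le)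
    moreover have "real n*(real n+1)*(1-x)^2 \<ge> 0" by simp
    ultimately show ?thesis by (smt (verit))
  qed
  have pos: "(1-x)^3 > 0" using assms by simp
  have "(1-x)^3 * (\<Sum>k<n. (real k+1)*(real k+2)/2 * x^k) \<le> 1"
    using Q_identity[of x n] R assms unfolding R_def by simp
  then show ?thesis using pos by (simp add: field_simps)
qed



lemma exp_sums_real: "(\<lambda>n. (y::real)^n / fact n) sums exp y"
  using exp_converges[of y] by (simp add: divide_inverse mult.commute)

lemma exp_partial_le: "0 \<le> (y::real) \<Longrightarrow> (\<Sum>k<N. y^k / fact k) \<le> exp y"
  using sum_le_suminf[OF sums_summable[OF exp_sums_real[of y]], of "{..<N}"] sums_unique[OF exp_sums_real[of y]]
  by simp

lemma lin4:
  fixes f1 f2 f3 f4 :: "'a \<Rightarrow> real"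
  assumes "integrable M f1" "integrable M f2" "integrable M f3" "integrable M f4"
  shows "integral\<^sup>L M (\<lambda>x. c1 * f1 x + c2 * f2 x + c3 * f3 x + c4 * f4 x)
     = c1 * integral\<^sup>L M f1 + c2 * integral\<^sup>L M f2 + c3 * integral\<^sup>L M f3 + c4 * integral\<^sup>L M f4"
  using assms by (simp add: integral_add integral_mult_right)



context prob_space
begin

lemma one_var:
  fixes Y :: "'a \<Rightarrow> real" and eps l :: real
  assumes int: "\<And>k::nat. integrable M (\<lambda>x. (Y x) ^ k)"
    and mean: "integral\<^sup>L M Y = 0"
    and eps: "eps > 0"
    and bern: "\<And>k::nat. k \<ge> 3 \<Longrightarrow>
           \<bar>integral\<^sup>L M (\<lambda>x. (Y x) ^ k)\<bar> \<le> 1/2 * fact k * eps ^ (k - 2) * integral\<^sup>L M (\<lambda>x. (Y x) ^ 2)"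
    and l0: "0 \<le> l" and l1: "l < 1 / eps"
  shows "(1 - l * eps)^2 * (1 - 3 * l * eps) / (1 - l * eps + 6 * l^2 * eps^2)^2 * integral\<^sup>L M (\<lambda>x. (Y x)^2)
     \<le> integral\<^sup>L M (\<lambda>x. (Y x)^2 * exp (l * Y x)) / integral\<^sup>L M (\<lambda>x. exp (l * Y x))
    - (integral\<^sup>L M (\<lambda>x. Y x * exp (l * Y x)))^2 / (integral\<^sup>L M (\<lambda>x. exp (l * Y x)))^2
   \<and> integral\<^sup>L M (\<lambda>x. (Y x)^2 * exp (l * Y x)) / integral\<^sup>L M (\<lambda>x. exp (l * Y x))
    - (integral\<^sup>L M (\<lambda>x. Y x * exp (l * Y x)))^2 / (integral\<^sup>L M (\<lambda>x. exp (l * Y x)))^2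
     \<le> integral\<^sup>L M (\<lambda>x. (Y x)^2) / (1 - l * eps)^3"
proof -
  define m where "m k = integral\<^sup>L M (\<lambda>x. (Y x) ^ k)" for k
  define s where "s = m 2"
  define x where "x = l * eps"
  have x0: "0 \<le> x" using l0 eps unfolding x_def by simp
  have x1: "x < 1" using l1 eps unfolding x_def by (simp add: field_simps)
  have meas[measurable]: "Y \<in> borel_measurable M"
    using borel_measurable_integrable[OF int[of 1]] by simp
  have m0: "m 0 = 1" unfolding m_def by (simp add: prob_space)
  have m1: "m 1 = 0" unfolding m_def using mean by simp
  have s0: "s \<ge> 0" unfolding s_def m_def by (intro integral_nonneg_AE) auto
  have mb: "\<bar>m k\<bar> \<le> 1/2 * fact k * eps ^ (k - 2) * s" if "k \<ge> 2" for k
  proof (cases "k = 2")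
    case True then show ?thesis using s0 unfolding s_def by simp
  next
    case False then show ?thesis using bern[of k] that unfolding m_def s_def by simp
  qed
  have m4s: "s^2 \<le> m 4"
  proof -
    have "0 \<le> integral\<^sup>L M (\<lambda>w. (Y w ^ 2 - s)^2)" by (intro integral_nonneg_AE) auto
    also have "integral\<^sup>L M (\<lambda>w. (Y w ^ 2 - s)^2) = integral\<^sup>L M (\<lambda>w. 1 * Y w ^ 4 + (- (2 * s)) * Y w ^ 2 + s^2 * Y w ^ 0 + 0 * Y w ^ 0)"
      by (intro Bochner_Integration.integral_cong) (auto simp: power2_eq_square power4_eq_xxxx algebra_simps)
    also have "\<dots> = m 4 - 2 * s * s + s^2 * m 0"
      unfolding m_def by (subst lin4) (auto simp: int s_def m_def)
    finally show ?thesis using m0 by (simp add: power2_eq_square)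
  qed
  have s12: "s \<le> 12 * eps^2"
  proof (cases "s = 0")
    case True then show ?thesis by simp
  next
    case False
    have "m 4 \<le> 12 * eps^2 * s" using mb[of 4] by (simp add: fact_numeral)
    with m4s have "s * s \<le> (12*eps^2) * s" by (simp add: power2_eq_square mult.commute)
    then show ?thesis using False s0 by (simp add: mult_le_cancel_right)
  qed
  have ls: "l^2 * s \<le> 12 * x^2"
    using mult_left_mono[OF s12, of "l^2"] unfolding x_def by (simp add: power_mult_distrib algebra_simps)
  define E0 where "E0 w = exp (l * Y w) + exp (- (l * Y w))" for w
  define f where "f k w = (l^k * (1 + (-1)^k) / fact k) * Y w ^ (k+2)" for k w
  have f_nonneg: "0 \<le> f k w" for k w
  proof (cases "even k")
    case True
    then have "even (k+2)" by simp
    then have "0 \<le> Y w ^ (k+2)" by (rule zero_le_even_power)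
    moreover have "0 \<le> l^k * (1 + (-1)^k) / fact k" using True l0 by simp
    ultimately show ?thesis unfolding f_def by (rule mult_nonneg_nonneg[rotated])
  next
    case False then show ?thesis unfolding f_def by simp
  qed
  have f_sums: "(\<lambda>k. f k w) sums (Y w ^ 2 * E0 w)" for w
  proof -
    have "(\<lambda>k. (l * Y w)^k / fact k + (- (l * Y w))^k / fact k) sums (exp (l*Y w) + exp (- (l * Y w)))"
      by (intro sums_add exp_sums_real)
    then have "(\<lambda>k. Y w ^ 2 * ((l * Y w)^k / fact k + (- (l * Y w))^k / fact k)) sums (Y w ^ 2 * E0 w)"
      unfolding E0_def by (rule sums_mult)
    moreover have "Y w ^ 2 * ((l * Y w)^k / fact k + (- (l * Y w))^k / fact k) = f k w" for k
      unfolding f_def by (simp add: power_mult_distrib power_minus[of "l * Y w"] field_simps power_add power2_eq_square)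
    ultimately show ?thesis by simp
  qed
  have f_int: "integrable M (f k)" for k
    unfolding f_def using int[of "k+2"] by simp
  have f_integral: "integral\<^sup>L M (f k) = (l^k * (1 + (-1)^k) / fact k) * m (k+2)" for k
    unfolding f_def m_def by simp
  have fact2: "fact (k+2) = (real k + 2) * (real k + 1) * fact k" for k
  proof -
    have "k + 2 = Suc (Suc k)" by simp
    then show ?thesis by (simp only: fact_Suc) (simp add: algebra_simps)
  qed
  have termb: "l^k / fact k * \<bar>m (k+2)\<bar> \<le> s * ((real k+1)*(real k+2)/2 * x^k)" for k
  proof -
    have "l^k / fact k * \<bar>m (k+2)\<bar> \<le> l^k / fact k * (1/2 * fact (k+2) * eps ^ k * s)"
      using mb[of "k+2"] l0 by (intro mult_left_mono) auto
    also have "\<dots> = s * ((real k+1)*(real k+2)/2 * x^k)"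
      unfolding fact2 x_def by (simp add: power_mult_distrib field_simps)
    finally show ?thesis .
  qed
  have fint_le: "integral\<^sup>L M (f k) \<le> 2 * s * ((real k+1)*(real k+2)/2 * x^k)" for k
  proof -
    have c0: "0 \<le> l^k * (1 + (-1)^k) / fact k" using l0 by (cases "even k") auto
    have c2: "l^k * (1 + (-1)^k) / fact k \<le> 2 * (l^k / fact k)" using l0 by (cases "even k") (auto simp: mult.commute)
    have "integral\<^sup>L M (f k) \<le> (l^k * (1 + (-1)^k) / fact k) * \<bar>m (k+2)\<bar>"
      unfolding f_integral using c0 by (intro mult_left_mono) auto
    also have "\<dots> \<le> 2 * (l^k / fact k) * \<bar>m (k+2)\<bar>" using c2 by (intro mult_right_mono) auto
    also have "\<dots> = 2 * (l^k / fact k * \<bar>m (k+2)\<bar>)" by (simp only: mult.assoc)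
    also have "\<dots> \<le> 2 * (s * ((real k+1)*(real k+2)/2 * x^k))"
      using termb[of k] by (rule mult_left_mono) simp
    also have "\<dots> = 2 * s * ((real k+1)*(real k+2)/2 * x^k)" by (simp only: mult.assoc)
    finally show ?thesis .
  qed
  have E2_int: "integrable M (\<lambda>w. Y w ^ 2 * E0 w)"
  proof -
    have "integrable M (\<lambda>w. \<Sum>k. f k w)"
    proof (rule integrable_suminf)
      show "integrable M (f k)" for k by (rule f_int)
      show "AE w in M. summable (\<lambda>k. norm (f k w))"
        using f_sums f_nonneg by (intro AE_I2) (auto intro: sums_summable)
      show "summable (\<lambda>k. integral\<^sup>L M (\<lambda>w. norm (f k w)))"
      proof (rule summableI_nonneg_bounded)
        show "0 \<le> integral\<^sup>L M (\<lambda>w. norm (f k w))" for k by (intro integral_nonneg_AE) auto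
        show "(\<Sum>k<n. integral\<^sup>L M (\<lambda>w. norm (f k w))) \<le> 2 * s / (1-x)^3" for n
        proof -
          have "(\<Sum>k<n. integral\<^sup>L M (\<lambda>w. norm (f k w))) = (\<Sum>k<n. integral\<^sup>L M (f k))"
            using f_nonneg by (simp add: abs_of_nonneg)
          also have "\<dots> \<le> (\<Sum>k<n. 2 * s * ((real k+1)*(real k+2)/2 * x^k))"
            by (intro sum_mono fint_le)
          also have "\<dots> = 2 * s * (\<Sum>k<n. (real k+1)*(real k+2)/2 * x^k)"
            by (simp add: sum_distrib_left)
          also have "\<dots> \<le> 2 * s * (1/(1-x)^3)"
            using Q_bound[OF x0 x1] s0 by (intro mult_left_mono) auto
          finally show ?thesis by simp
        qed
      qed
    qed
    moreover have "(\<Sum>k. f k w) = Y w ^ 2 * E0 w" for w using f_sums[of w] by (simp add: sums_iff)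
    ultimately show ?thesis by simp
  qed
  have E0_nonneg: "0 \<le> E0 w" for w unfolding E0_def by (simp add: add_nonneg_nonneg)
  have E0_int: "integrable M E0"
  proof (rule Bochner_Integration.integrable_bound[of _ "\<lambda>w. 2 * exp l + Y w ^ 2 * E0 w"])
    show "integrable M (\<lambda>w. 2 * exp l + Y w ^ 2 * E0 w)" using E2_int by simp
    show "E0 \<in> borel_measurable M" unfolding E0_def by measurable
    show "AE w in M. norm (E0 w) \<le> norm (2 * exp l + Y w ^ 2 * E0 w)"
    proof (intro AE_I2)
      fix w
      have "E0 w \<le> 2 * exp l + Y w ^ 2 * E0 w"
      proof (cases "\<bar>Y w\<bar> \<le> 1")
        case True
        then have "\<bar>l * Y w\<bar> \<le> l" using l0 by (simp add: abs_mult mult_left_le)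
        then have "l * Y w \<le> l" "- (l * Y w) \<le> l" by auto
        then have "E0 w \<le> 2 * exp l" unfolding E0_def by (smt (verit) exp_le_cancel_iff)
        moreover have "0 \<le> Y w ^ 2 * E0 w" using E0_nonneg by simp
        ultimately show ?thesis by linarith
      next
        case False
        then have "1 \<le> Y w ^ 2" using abs_le_square_iff[of 1 "Y w"] by simp
        then have "E0 w \<le> Y w ^ 2 * E0 w" using E0_nonneg mult_right_mono[of 1 "Y w ^ 2" "E0 w"] by simp
        then show ?thesis by (smt (verit) exp_gt_zero)
      qed
      then show "norm (E0 w) \<le> norm (2 * exp l + Y w ^ 2 * E0 w)"
        using E0_nonneg by simp
    qed
  qed
  define e where "e w = exp (l * Y w)" for w
  have e_pos: "0 < e w" for w unfolding e_def by simp
  have e_le: "e w \<le> E0 w" for w unfolding e_def E0_def by (smt (verit) exp_gt_zero)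
  have e_int: "integrable M e"
  proof (rule Bochner_Integration.integrable_bound[OF E0_int])
    show "e \<in> borel_measurable M" unfolding e_def by measurable
    show "AE w in M. norm (e w) \<le> norm (E0 w)" using e_le e_pos E0_nonneg
      by (intro AE_I2) (simp add: abs_of_pos abs_of_nonneg)
  qed
  have e2_int: "integrable M (\<lambda>w. Y w ^ 2 * e w)"
  proof (rule Bochner_Integration.integrable_bound[OF E2_int])
    show "(\<lambda>w. Y w ^ 2 * e w) \<in> borel_measurable M" unfolding e_def by measurable
    show "AE w in M. norm (Y w ^ 2 * e w) \<le> norm (Y w ^ 2 * E0 w)" using e_le e_pos E0_nonneg
      by (intro AE_I2) (simp add: abs_mult mult_left_mono abs_of_pos less_imp_le)
  qed
  have e1_int: "integrable M (\<lambda>w. Y w * e w)"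
  proof (rule Bochner_Integration.integrable_bound[of _ "\<lambda>w. E0 w + Y w ^ 2 * E0 w"])
    show "integrable M (\<lambda>w. E0 w + Y w ^ 2 * E0 w)" using E0_int E2_int by simp
    show "(\<lambda>w. Y w * e w) \<in> borel_measurable M" unfolding e_def by measurable
    show "AE w in M. norm (Y w * e w) \<le> norm (E0 w + Y w ^ 2 * E0 w)"
    proof (intro AE_I2)
      fix w
      have y: "\<bar>Y w\<bar> \<le> 1 + Y w ^ 2"
      proof (cases "\<bar>Y w\<bar> \<le> 1")
        case True then show ?thesis by (smt (verit) zero_le_power2)
      next
        case False
        then have "\<bar>Y w\<bar> * 1 \<le> \<bar>Y w\<bar> * \<bar>Y w\<bar>" by (intro mult_left_mono) auto
        then show ?thesis by (simp add: power2_eq_square abs_mult_self_eq)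
      qed
      have "\<bar>Y w\<bar> * e w \<le> (1 + Y w ^ 2) * E0 w"
        using y e_le e_pos by (intro mult_mono) (auto intro: less_imp_le)
      then show "norm (Y w * e w) \<le> norm (E0 w + Y w ^ 2 * E0 w)"
        using e_pos[of w] E0_nonneg[of w] by (simp add: abs_mult algebra_simps abs_of_pos)
    qed
  qed
  have ser: "(\<lambda>N. \<Sum>k<N. l^k / fact k * m (k+j)) \<longlonglongrightarrow> integral\<^sup>L M (\<lambda>w. Y w ^ j * e w)"
     if j: "even j" and wint: "integrable M (\<lambda>w. Y w ^ j * E0 w)" for j
  proof -
    have "(\<lambda>N. integral\<^sup>L M (\<lambda>w. \<Sum>k<N. l^k / fact k * Y w ^ (k+j))) \<longlonglongrightarrow> integral\<^sup>L M (\<lambda>w. Y w ^ j * e w)"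
    proof (rule integral_dominated_convergence[where w="\<lambda>w. Y w ^ j * E0 w"])
      show "(\<lambda>w. Y w ^ j * e w) \<in> borel_measurable M" unfolding e_def by measurable
      show "(\<lambda>w. \<Sum>k<N. l^k / fact k * Y w ^ (k+j)) \<in> borel_measurable M" for N by measurable
      show "integrable M (\<lambda>w. Y w ^ j * E0 w)" by (rule wint)
      show "AE w in M. (\<lambda>N. \<Sum>k<N. l^k / fact k * Y w ^ (k+j)) \<longlonglongrightarrow> Y w ^ j * e w"
      proof (intro AE_I2)
        fix w
        have "(\<lambda>k. Y w ^ j * ((l * Y w)^k / fact k)) sums (Y w ^ j * e w)"
          unfolding e_def by (intro sums_mult exp_sums_real)
        moreover have "Y w ^ j * ((l * Y w)^k / fact k) = l^k / fact k * Y w ^ (k+j)" for k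
          by (simp add: power_mult_distrib power_add)
        ultimately show "(\<lambda>N. \<Sum>k<N. l^k / fact k * Y w ^ (k+j)) \<longlonglongrightarrow> Y w ^ j * e w"
          by (simp add: sums_def)
      qed
      show "AE w in M. norm (\<Sum>k<N. l^k / fact k * Y w ^ (k+j)) \<le> Y w ^ j * E0 w" for N
      proof (intro AE_I2)
        fix w
        have "norm (\<Sum>k<N. l^k / fact k * Y w ^ (k+j)) \<le> (\<Sum>k<N. \<bar>l^k / fact k * Y w ^ (k+j)\<bar>)"
          unfolding real_norm_def by (rule sum_abs)
        also have "\<dots> = \<bar>Y w\<bar>^j * (\<Sum>k<N. (l * \<bar>Y w\<bar>)^k / fact k)"
          by (simp add: sum_distrib_left abs_mult power_abs power_mult_distrib power_add l0 mult_ac)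
        also have "\<dots> \<le> \<bar>Y w\<bar>^j * exp (l * \<bar>Y w\<bar>)"
          using l0 by (intro mult_left_mono exp_partial_le) auto
        also have "\<dots> \<le> Y w ^ j * E0 w"
        proof -
          have "\<bar>Y w\<bar>^j = Y w ^ j" using j by (rule power_even_abs)
          moreover have "exp (l * \<bar>Y w\<bar>) \<le> E0 w" unfolding E0_def
            by (cases "Y w \<ge> 0") (auto simp: add_increasing add_increasing2)
          moreover have "0 \<le> Y w ^ j" using j by (rule zero_le_even_power)
          ultimately show ?thesis by (metis mult_left_mono)
        qed
        finally show "norm (\<Sum>k<N. l^k / fact k * Y w ^ (k+j)) \<le> Y w ^ j * E0 w" .
      qed
    qed
    moreover have "integral\<^sup>L M (\<lambda>w. \<Sum>k<N. l^k / fact k * Y w ^ (k+j)) = (\<Sum>k<N. l^k / fact k * m (k+j))" for N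
      unfolding m_def by (subst Bochner_Integration.integral_sum) (auto simp: int)
    ultimately show ?thesis by simp
  qed
  define A where "A = integral\<^sup>L M e"
  define B where "B = integral\<^sup>L M (\<lambda>w. Y w * e w)"
  define C where "C = integral\<^sup>L M (\<lambda>w. Y w ^ 2 * e w)"
  have int1: "integrable M Y" using int[of 1] by simp
  have A1: "1 \<le> A"
  proof -
    have "integral\<^sup>L M (\<lambda>w. 1 + l * Y w) \<le> A" unfolding A_def
      using int1 e_int by (intro integral_mono) (auto simp: e_def exp_ge_add_one_self)
    moreover have "integral\<^sup>L M (\<lambda>w. 1 + l * Y w) = 1"
      using int1 mean by (subst Bochner_Integration.integral_add) (auto simp: prob_space)
    ultimately show ?thesis by simp
  qed
  have C0: "0 \<le> C" unfolding C_def using e_pos by (intro integral_nonneg_AE AE_I2 mult_nonneg_nonneg) (auto intro: less_imp_le)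
  have mle: "l^k / fact k * m (k+2) \<le> l^k / fact k * \<bar>m (k+2)\<bar>" for k
    using l0 by (intro mult_left_mono) auto
  have Cb: "C \<le> s / (1-x)^3"
  proof (rule LIMSEQ_le_const2)
    show "(\<lambda>N. \<Sum>k<N. l^k / fact k * m (k+2)) \<longlonglongrightarrow> C" using ser[of 2] E2_int unfolding C_def by simp
    show "\<exists>N. \<forall>n\<ge>N. (\<Sum>k<n. l^k / fact k * m (k+2)) \<le> s / (1-x)^3"
    proof (intro exI allI impI)
      fix n
      have "(\<Sum>k<n. l^k / fact k * m (k+2)) \<le> (\<Sum>k<n. s * ((real k+1)*(real k+2)/2 * x^k))"
        by (intro sum_mono order_trans[OF mle termb])
      also have "\<dots> = s * (\<Sum>k<n. (real k+1)*(real k+2)/2 * x^k)" by (simp add: sum_distrib_left)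
      also have "\<dots> \<le> s * (1/(1-x)^3)" using Q_bound[OF x0 x1] s0 by (intro mult_left_mono) auto
      finally show "(\<Sum>k<n. l^k / fact k * m (k+2)) \<le> s / (1-x)^3" by simp
    qed
  qed
  have shift2: "(\<Sum>k<Suc (Suc n). g k) = g 0 + g 1 + (\<Sum>k<n. g (Suc (Suc k)))" for g :: "nat \<Rightarrow> real" and n
    by (simp only: sum.lessThan_Suc_shift add.assoc One_nat_def)
  have Ab: "A \<le> 1 + l^2 * s / 2 * (1/(1-x))"
  proof (rule LIMSEQ_le_const2)
    have "(\<lambda>N. \<Sum>k<N. l^k / fact k * m k) \<longlonglongrightarrow> A" using ser[of 0] E0_int unfolding A_def by simp
    then show "(\<lambda>N. \<Sum>k<N+2. l^k / fact k * m k) \<longlonglongrightarrow> A" by (rule LIMSEQ_ignore_initial_segment)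
    show "\<exists>N. \<forall>n\<ge>N. (\<Sum>k<n+2. l^k / fact k * m k) \<le> 1 + l^2 * s / 2 * (1/(1-x))"
    proof (intro exI allI impI)
      fix n
      have "(\<Sum>k<n+2. l^k / fact k * m k) = (\<Sum>k<Suc (Suc n). l^k / fact k * m k)" by simp
      also have "\<dots> = 1 + (\<Sum>k<n. l^(Suc (Suc k)) / fact (Suc (Suc k)) * m (Suc (Suc k)))"
        unfolding shift2 using m0 m1 by simp
      also have "\<dots> \<le> 1 + (\<Sum>k<n. l^2 * s / 2 * x^k)"
      proof (intro add_left_mono sum_mono)
        fix k
        have "l^(Suc (Suc k)) / fact (Suc (Suc k)) * m (Suc (Suc k))
            \<le> l^(Suc (Suc k)) / fact (Suc (Suc k)) * (1/2 * fact (k+2) * eps^k * s)"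
          using mb[of "k+2"] l0 by (intro mult_left_mono) (auto simp: abs_le_iff)
        also have "\<dots> = l^2 * s / 2 * x^k" unfolding x_def
          by (simp add: power_mult_distrib field_simps power2_eq_square del: fact_Suc)
        finally show "l^(Suc (Suc k)) / fact (Suc (Suc k)) * m (Suc (Suc k)) \<le> l^2 * s / 2 * x^k" .
      qed
      also have "\<dots> = 1 + l^2 * s / 2 * ((1 - x^n)/(1-x))"
      proof -
        have "(\<Sum>k<n. l^2 * s / 2 * x^k) = l^2 * s / 2 * (\<Sum>k<n. x^k)" by (rule sum_distrib_left[symmetric])
        also have "(\<Sum>k<n. x^k) = (1 - x^n)/(1-x)" using x1 by (simp add: sum_gp_strict)
        finally show ?thesis by simp
      qed
      also have "\<dots> \<le> 1 + l^2 * s / 2 * (1/(1-x))"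
        using x0 x1 s0 by (intro add_left_mono mult_left_mono divide_right_mono) auto
      finally show "(\<Sum>k<n+2. l^k / fact k * m k) \<le> 1 + l^2 * s / 2 * (1/(1-x))" .
    qed
  qed
  have Apos: "0 < A" using A1 by simp
  have CS: "B^2 \<le> A * C"
  proof -
    define t where "t = B / A"
    have "0 \<le> integral\<^sup>L M (\<lambda>w. (Y w - t)^2 * e w)"
      using e_pos by (intro integral_nonneg_AE AE_I2 mult_nonneg_nonneg) (auto intro: less_imp_le)
    also have "integral\<^sup>L M (\<lambda>w. (Y w - t)^2 * e w)
        = integral\<^sup>L M (\<lambda>w. 1 * (Y w ^ 2 * e w) + (- (2 * t)) * (Y w * e w) + t^2 * e w + 0 * e w)"
      by (intro Bochner_Integration.integral_cong) (auto simp: power2_eq_square algebra_simps)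
    also have "\<dots> = C - 2 * t * B + t^2 * A"
      unfolding A_def B_def C_def by (subst lin4) (auto simp: e_int e1_int e2_int)
    finally have "0 \<le> C - 2 * t * B + t^2 * A" .
    then have "0 \<le> A * (C - 2 * t * B + t^2 * A)" using Apos by simp
    also have "A * (C - 2 * t * B + t^2 * A) = A * C - B^2"
      unfolding t_def using Apos by (simp add: field_simps power2_eq_square)
    finally show ?thesis by simp
  qed
  have pt: "(1 + l * Y w) * Y w ^ 2 + (1 - l * Y w) * s + l * m 3 \<le> e w * (Y w ^ 2 * A - 2 * Y w * B + C)" for w
  proof -
    define a where "a = Y w"
    have "integral\<^sup>L M (\<lambda>v. ((1 + l*a) * a^2) * Y v ^ 0 + (l * a^2 - 2 * a * (1 + l * a)) * Y v ^ 1 + (1 - l * a) * Y v ^ 2 + l * Y v ^ 3)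
        \<le> integral\<^sup>L M (\<lambda>v. (e w * a^2) * e v + (- (2 * e w * a)) * (Y v * e v) + e w * (Y v ^ 2 * e v) + 0 * e v)"
    proof (rule integral_mono)
      show "integrable M (\<lambda>v. ((1 + l*a) * a^2) * Y v ^ 0 + (l * a^2 - 2 * a * (1 + l * a)) * Y v ^ 1 + (1 - l * a) * Y v ^ 2 + l * Y v ^ 3)"
        by (intro Bochner_Integration.integrable_add Bochner_Integration.integrable_mult_right int)
      show "integrable M (\<lambda>v. (e w * a^2) * e v + (- (2 * e w * a)) * (Y v * e v) + e w * (Y v ^ 2 * e v) + 0 * e v)"
        by (intro Bochner_Integration.integrable_add Bochner_Integration.integrable_mult_right e_int e1_int e2_int)
      fix v assume "v \<in> space M"
      have "1 + (l*a + l*Y v) \<le> e w * e v" unfolding e_def a_def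
        using exp_ge_add_one_self[of "l * Y w + l * Y v"] by (simp add: exp_add)
      then have "(a - Y v)^2 * (1 + l*a + l*Y v) \<le> (a - Y v)^2 * (e w * e v)" by (intro mult_left_mono) auto
      moreover have "((1 + l*a) * a^2) * Y v ^ 0 + (l * a^2 - 2 * a * (1 + l * a)) * Y v ^ 1 + (1 - l * a) * Y v ^ 2 + l * Y v ^ 3
          = (a - Y v)^2 * (1 + l*a + l*Y v)"
        by (simp add: algebra_simps power2_eq_square power3_eq_cube)
      moreover have "(e w * a^2) * e v + (- (2 * e w * a)) * (Y v * e v) + e w * (Y v ^ 2 * e v) + 0 * e v
          = (a - Y v)^2 * (e w * e v)"
        by (simp add: algebra_simps power2_eq_square)
      ultimately show "((1 + l*a) * a^2) * Y v ^ 0 + (l * a^2 - 2 * a * (1 + l * a)) * Y v ^ 1 + (1 - l * a) * Y v ^ 2 + l * Y v ^ 3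
          \<le> (e w * a^2) * e v + (- (2 * e w * a)) * (Y v * e v) + e w * (Y v ^ 2 * e v) + 0 * e v" by simp
    qed
    also have "integral\<^sup>L M (\<lambda>v. (e w * a^2) * e v + (- (2 * e w * a)) * (Y v * e v) + e w * (Y v ^ 2 * e v) + 0 * e v)
        = (e w * a^2) * A + (- (2 * e w * a)) * B + e w * C + 0 * A"
      unfolding A_def B_def C_def by (rule lin4[OF e_int e1_int e2_int e_int])
    also have "integral\<^sup>L M (\<lambda>v. ((1 + l*a) * a^2) * Y v ^ 0 + (l * a^2 - 2 * a * (1 + l * a)) * Y v ^ 1 + (1 - l * a) * Y v ^ 2 + l * Y v ^ 3)
        = ((1 + l*a) * a^2) * m 0 + (l * a^2 - 2 * a * (1 + l * a)) * m 1 + (1 - l * a) * m 2 + l * m 3"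
      unfolding m_def by (rule lin4[OF int int int int])
    finally show ?thesis using m0 m1 unfolding a_def s_def by (simp add: algebra_simps power2_eq_square)
  qed
  have Nlow: "2 * (s + l * m 3) \<le> 2 * (A * C - B^2)"
  proof -
    have "integral\<^sup>L M (\<lambda>w. 1 * Y w ^ 2 + l * Y w ^ 3 + (s + l * m 3) * Y w ^ 0 + (- (l * s)) * Y w ^ 1)
        \<le> integral\<^sup>L M (\<lambda>w. A * (Y w ^ 2 * e w) + (- (2 * B)) * (Y w * e w) + C * e w + 0 * e w)"
    proof (rule integral_mono)
      show "integrable M (\<lambda>w. 1 * Y w ^ 2 + l * Y w ^ 3 + (s + l * m 3) * Y w ^ 0 + (- (l * s)) * Y w ^ 1)"
        by (intro Bochner_Integration.integrable_add Bochner_Integration.integrable_mult_right int)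
      show "integrable M (\<lambda>w. A * (Y w ^ 2 * e w) + (- (2 * B)) * (Y w * e w) + C * e w + 0 * e w)"
        by (intro Bochner_Integration.integrable_add Bochner_Integration.integrable_mult_right e_int e1_int e2_int)
      fix w assume "w \<in> space M"
      have "1 * Y w ^ 2 + l * Y w ^ 3 + (s + l * m 3) * Y w ^ 0 + (- (l * s)) * Y w ^ 1
          = (1 + l * Y w) * Y w ^ 2 + (1 - l * Y w) * s + l * m 3"
        by (simp add: algebra_simps power2_eq_square power3_eq_cube)
      moreover have "A * (Y w ^ 2 * e w) + (- (2 * B)) * (Y w * e w) + C * e w + 0 * e w
          = e w * (Y w ^ 2 * A - 2 * Y w * B + C)" by (simp add: algebra_simps)
      ultimately show "1 * Y w ^ 2 + l * Y w ^ 3 + (s + l * m 3) * Y w ^ 0 + (- (l * s)) * Y w ^ 1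
          \<le> A * (Y w ^ 2 * e w) + (- (2 * B)) * (Y w * e w) + C * e w + 0 * e w" using pt[of w] by simp
    qed
    also have "integral\<^sup>L M (\<lambda>w. A * (Y w ^ 2 * e w) + (- (2 * B)) * (Y w * e w) + C * e w + 0 * e w)
        = A * C + (- (2 * B)) * B + C * A + 0 * A"
      unfolding A_def B_def C_def by (rule lin4[OF e2_int e1_int e_int e_int])
    also have "integral\<^sup>L M (\<lambda>w. 1 * Y w ^ 2 + l * Y w ^ 3 + (s + l * m 3) * Y w ^ 0 + (- (l * s)) * Y w ^ 1)
        = 1 * m 2 + l * m 3 + (s + l * m 3) * m 0 + (- (l * s)) * m 1"
      unfolding m_def by (rule lin4[OF int int int int])
    finally show ?thesis using m0 m1 unfolding s_def by (simp add: algebra_simps power2_eq_square)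
  qed
  have m3b: "- (3 * x * s) \<le> l * m 3"
  proof -
    have "\<bar>m 3\<bar> \<le> 3 * eps * s" using mb[of 3] by (simp add: fact_numeral)
    then have "l * \<bar>m 3\<bar> \<le> l * (3 * eps * s)" using l0 by (rule mult_left_mono)
    moreover have "- (l * m 3) \<le> l * \<bar>m 3\<bar>" using l0 abs_ge_minus_self[of "l * m 3"] by (simp add: abs_mult)
    ultimately show ?thesis unfolding x_def by (simp add: algebra_simps)
  qed
  have gf: "C / A - B^2 / A^2 = (A*C - B^2) / A^2" using Apos by (simp add: field_simps power2_eq_square)
  have up: "C / A - B^2 / A^2 \<le> s / (1-x)^3"
  proof -
    have "C / A \<le> C" using C0 A1 Apos by (simp add: divide_le_eq mult_le_cancel_left1 mult_left_le)
    moreover have "0 \<le> B^2 / A^2" by simp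
    ultimately show ?thesis using Cb by linarith
  qed
  have low: "(1-x)^2*(1-3*x)/(1-x+6*x^2)^2 * s \<le> C/A - B^2/A^2"
  proof (cases "1 - 3*x \<ge> 0")
    case True
    have Dpos: "0 < 1-x+6*x^2" using x1 x0 by (smt (verit) zero_le_power2)
    have "l^2 * s / 2 * (1/(1-x)) \<le> 6 * x^2 * (1/(1-x))"
      using ls x1 by (intro mult_right_mono) auto
    then have "A \<le> 1 + 6 * x^2 * (1/(1-x))" using Ab by linarith
    moreover have "1 + 6 * x^2 * (1/(1-x)) = (1-x+6*x^2)/(1-x)" using x1 by (simp add: field_simps)
    ultimately have AD: "A \<le> (1-x+6*x^2)/(1-x)" by simp
    have N: "(1-3*x) * s \<le> A*C - B^2" using Nlow m3b by (simp add: algebra_simps)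
    have N0: "0 \<le> (1-3*x) * s" using True s0 by simp
    have "(1-x)^2*(1-3*x)/(1-x+6*x^2)^2 * s = (1-3*x) * s / ((1-x+6*x^2)/(1-x))^2"
      using x1 Dpos by (simp add: field_simps power2_eq_square)
    also have "\<dots> \<le> (1-3*x) * s / A^2"
      using N0 Apos AD by (intro divide_left_mono power_mono mult_pos_pos) auto
    also have "\<dots> \<le> (A*C - B^2) / A^2" using N by (intro divide_right_mono) auto
    finally show ?thesis using gf by simp
  next
    case False
    have "(1-x)^2*(1-3*x)/(1-x+6*x^2)^2 * s \<le> 0"
      using False s0 by (intro mult_nonpos_nonneg divide_nonpos_nonneg mult_nonneg_nonpos) auto
    moreover have "0 \<le> (A*C - B^2) / A^2" using CS by simp
    ultimately show ?thesis using gf by simp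
  qed
  have eq: "(\<lambda>w. exp (l * Y w)) = e" by (simp add: fun_eq_iff e_def)
  have x3: "3 * l * eps = 3 * x" and x2: "l^2 * eps^2 = x^2" unfolding x_def by (simp_all add: power_mult_distrib)
  have sY: "integral\<^sup>L M (\<lambda>x. (Y x)^2) = s" unfolding s_def m_def by simp
  have eq1: "(\<lambda>w. Y w * exp (l * Y w)) = (\<lambda>w. Y w * e w)" by (simp add: fun_eq_iff e_def)
  have eq2: "(\<lambda>w. (Y w)^2 * exp (l * Y w)) = (\<lambda>w. (Y w)^2 * e w)" by (simp add: fun_eq_iff e_def)
  show ?thesis unfolding eq eq1 eq2 x3 x2 sY
    using low up unfolding A_def[symmetric] B_def[symmetric] C_def[symmetric] x_def by (simp add: power_mult_distrib mult.assoc)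
qed

end


theorem lemma3:
  fixes M :: "'a measure" and X :: "nat \<Rightarrow> 'a \<Rightarrow> real" and n :: nat and eps l :: real
  assumes "prob_space M"
    and "prob_space.indep_vars M (\<lambda>_. borel) X {1..n}"
    and "\<forall>i\<in>{1..n}. \<forall>k::nat. integrable M (\<lambda>x. (X i x) ^ k)"
    and "\<forall>i\<in>{1..n}. integral\<^sup>L M (X i) = 0"
    and "eps > 0"
    and "\<forall>i\<in>{1..n}. \<forall>k::nat. k \<ge> 3 \<longrightarrow>
           \<bar>integral\<^sup>L M (\<lambda>x. (X i x) ^ k)\<bar>
             \<le> 1/2 * fact k * eps ^ (k - 2) * integral\<^sup>L M (\<lambda>x. (X i x) ^ 2)"
    and "0 \<le> l" and "l < 1 / eps"
  shows "(1 - l * eps)^2 * (1 - 3 * l * eps) / (1 - l * eps + 6 * l^2 * eps^2)^2 * sigma_sq M X n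
           \<le> sigma_bar_sq M X n l
       \<and> sigma_bar_sq M X n l \<le> sigma_sq M X n / (1 - l * eps)^3"
  proof -
  interpret P: prob_space M by (rule assms(1))
  have h: "(1 - l * eps)^2 * (1 - 3 * l * eps) / (1 - l * eps + 6 * l^2 * eps^2)^2 * integral\<^sup>L M (\<lambda>x. (X i x)^2)
     \<le> integral\<^sup>L M (\<lambda>x. (X i x)^2 * exp (l * X i x)) / integral\<^sup>L M (\<lambda>x. exp (l * X i x))
    - (integral\<^sup>L M (\<lambda>x. X i x * exp (l * X i x)))^2 / (integral\<^sup>L M (\<lambda>x. exp (l * X i x)))^2
   \<and> integral\<^sup>L M (\<lambda>x. (X i x)^2 * exp (l * X i x)) / integral\<^sup>L M (\<lambda>x. exp (l * X i x))
    - (integral\<^sup>L M (\<lambda>x. X i x * exp (l * X i x)))^2 / (integral\<^sup>L M (\<lambda>x. exp (l * X i x)))^2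
     \<le> integral\<^sup>L M (\<lambda>x. (X i x)^2) / (1 - l * eps)^3" if i: "i \<in> {1..n}" for i
    using P.one_var[of "X i" eps l] assms(3-8) i by blast
  have lo: "(1 - l * eps)^2 * (1 - 3 * l * eps) / (1 - l * eps + 6 * l^2 * eps^2)^2 * sigma_sq M X n
           \<le> sigma_bar_sq M X n l"
    unfolding sigma_sq_def sigma_bar_sq_def sum_distrib_left by (rule sum_mono) (use h in blast)
  have up: "sigma_bar_sq M X n l \<le> sigma_sq M X n / (1 - l * eps)^3"
    unfolding sigma_sq_def sigma_bar_sq_def sum_divide_distrib by (rule sum_mono) (use h in blast)
  show ?thesis using lo up by blast
qed

end
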